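(* Let $U\subset\mathbb R^m$ be compact, let $f:U\to\mathbb R$, and define $f^*(t)=\max_{u\in U}\{\langle u,t\rangle-f(u)\}$. Let $\mathcal X=\mathcal X_1\times\cdots\times\mathcal X_n$ be a block-structured parameter set and let $E(\bm\theta)=(E_1(\bm\theta),\dots,E_m(\bm\theta))$ with $E_j:\mathcal X\to\mathbb R$. Suppose that for each $j\in\{1,\dots,m\}$ and each block $i\in\{1,\dots,n\}$ there are functions $a_{ij},b_{ij}$ with $E_j(\bm\theta)=a_{ij}(\theta_i;\bar{\bm\theta}_i)-b_{ij}(\theta_i;\bar{\bm\theta}_i)$ for all $\bm\theta$, where $a_{ij}(\cdot;\bar{\bm\theta}_i)$ and $b_{ij}(\cdot;\bar{\bm\theta}_i)$ are convex in $\theta_i$ for each fixed $\bar{\bm\theta}_i$. For $j=1,\dots,m$ let $\underline u_j=\min_{u\in U}u_j$, $\bar u_j=\max_{u\in U}u_j$, $c_j^+=\max\{-\underline u_j,0\}$, $d_j^+=\max\{\bar u_j,0\}$, and let $c^+,d^+\in\mathbb R^m$ be the vectors with these components. Write $a_i=(a_{i1},\dots,a_{im})$, $b_i=(b_{i1},\dots,b_{im})$, and define $h_i(\theta_i;\bar{\bm\theta}_i)=\langle c^+,a_i(\theta_i;\bar{\bm\theta}_i)\rangle+\langle d^+,b_i(\theta_i;\bar{\bm\theta}_i)\rangle$, $g_i(\theta_i;\bar{\bm\theta}_i)=f^*(E(\bm\theta))+h_i(\theta_i;\bar{\bm\theta}_i)$. Then for every $i$, $f^*(E(\bm\theta))=g_i(\theta_i;\bar{\bm\theta}_i)-h_i(\theta_i;\bar{\bm\theta}_i)$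 with $g_i(\cdot;\bar{\bm\theta}_i)$ and $h_i(\cdot;\bar{\bm\theta}_i)$ convex in $\theta_i$ for every fixed $\bar{\bm\theta}_i$; in particular $f^*\circ E$ is BDC.
   Context: Block notation: for $\bm\theta\in\mathcal X$, $\theta_i$ is its $i$th block and $\bar{\bm\theta}_i$ is the vector obtained from $\bm\theta$ by setting the $i$th block to zero. A function is BDC if for every block $i$ it can be written as $g_i(\theta_i;\bar{\bm\theta}_i)-h_i(\theta_i;\bar{\bm\theta}_i)$ with both functions convex in $\theta_i$ for each fixed $\bar{\bm\theta}_i$. *)

theory Defs
  imports "HOL-Analysis.Analysis"
begin

text \<open>Convex conjugate of f restricted to U (the maximum, when attained, equals this supremum).\<close>
definition conjU :: "(real^'m \<Rightarrow> real) \<Rightarrow> (real^'m) set \<Rightarrow> real^'m \<Rightarrow> real" where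
  "conjU f U t = (SUP u\<in>U. inner u t - f u)"

definition lowU :: "(real^'m) set \<Rightarrow> 'm \<Rightarrow> real" where
  "lowU U j = (INF u\<in>U. u $ j)"

definition upU :: "(real^'m) set \<Rightarrow> 'm \<Rightarrow> real" where
  "upU U j = (SUP u\<in>U. u $ j)"

definition cplus :: "(real^'m) set \<Rightarrow> real^'m" where
  "cplus U = (\<chi> j. max (- lowU U j) 0)"

definition dplus :: "(real^'m) set \<Rightarrow> real^'m" where
  "dplus U = (\<chi> j. max (upU U j) 0)"

text \<open>Block-structured parameter set X_1 x ... x X_n: blocks indexed 0..n-1,
  unused indices fixed to 0.\<close>
definition paramset :: "nat \<Rightarrow> (nat \<Rightarrow> 'a::real_vector set) \<Rightarrow> (nat \<Rightarrow> 'a) set" where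
  "paramset n X = {\<theta>. (\<forall>i<n. \<theta> i \<in> X i) \<and> (\<forall>i\<ge>n. \<theta> i = 0)}"

text \<open>Block difference-of-convex (BDC); the second argument of g, h is \<theta> with block i set to 0.\<close>
definition BDC :: "nat \<Rightarrow> (nat \<Rightarrow> 'a::real_vector set) \<Rightarrow> ((nat \<Rightarrow> 'a) \<Rightarrow> real) \<Rightarrow> bool" where
  "BDC n X F \<longleftrightarrow> (\<forall>i<n. \<exists>g h :: 'a \<Rightarrow> (nat \<Rightarrow> 'a) \<Rightarrow> real.
     (\<forall>\<theta>\<in>paramset n X. F \<theta> = g (\<theta> i) (\<theta>(i := 0)) - h (\<theta> i) (\<theta>(i := 0))) \<and>
     (\<forall>\<theta>\<in>paramset n X. convex_on (X i) (\<lambda>x. g x (\<theta>(i := 0))) \<and>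
                          convex_on (X i) (\<lambda>x. h x (\<theta>(i := 0)))))"

definition hfun :: "(real^'m) set \<Rightarrow> (nat \<Rightarrow> 'm \<Rightarrow> 'a \<Rightarrow> (nat \<Rightarrow> 'a) \<Rightarrow> real)
    \<Rightarrow> (nat \<Rightarrow> 'm \<Rightarrow> 'a \<Rightarrow> (nat \<Rightarrow> 'a) \<Rightarrow> real) \<Rightarrow> nat \<Rightarrow> 'a \<Rightarrow> (nat \<Rightarrow> 'a) \<Rightarrow> real" where
  "hfun U a b i x \<theta>b = inner (cplus U) (\<chi> j. a i j x \<theta>b) + inner (dplus U) (\<chi> j. b i j x \<theta>b)"

definition gfun :: "(real^'m \<Rightarrow> real) \<Rightarrow> (real^'m) set \<Rightarrow> ((nat \<Rightarrow> 'a) \<Rightarrow> real^'m)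
    \<Rightarrow> (nat \<Rightarrow> 'm \<Rightarrow> 'a \<Rightarrow> (nat \<Rightarrow> 'a) \<Rightarrow> real)
    \<Rightarrow> (nat \<Rightarrow> 'm \<Rightarrow> 'a \<Rightarrow> (nat \<Rightarrow> 'a) \<Rightarrow> real) \<Rightarrow> nat \<Rightarrow> 'a \<Rightarrow> (nat \<Rightarrow> 'a) \<Rightarrow> real" where
  "gfun f U E a b i x \<theta>b = conjU f U (E (\<theta>b(i := x))) + hfun U a b i x \<theta>b"

end

theory Submission
  imports Defs
begin

lemma convex_on_sum_fun:
  assumes "finite J" "convex S" "\<And>j. j \<in> J \<Longrightarrow> convex_on S (F j)"
  shows "convex_on S (\<lambda>x. \<Sum>j\<in>J. F j x)"
  using assms
proof (induction J rule: finite_induct)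
  case empty
  then show ?case by (simp add: convex_on_const)
next
  case (insert j J)
  then show ?case by (simp add: convex_on_add)
qed

lemma conjU_max:
  assumes "\<And>t. \<exists>u\<in>U. \<forall>v\<in>U. inner v t - f v \<le> inner u t - f u"
  shows "\<exists>u\<in>U. conjU f U t = inner u t - f u \<and> (\<forall>v\<in>U. inner v t - f v \<le> conjU f U t)"
proof -
  obtain u where u: "u \<in> U" "\<forall>v\<in>U. inner v t - f v \<le> inner u t - f u"
    using assms by blast
  have bdd: "bdd_above ((\<lambda>v. inner v t - f v) ` U)" using u by (auto intro!: bdd_aboveI2)
  have eq: "conjU f U t = inner u t - f u"
    unfolding conjU_def
    by (rule antisym, rule cSUP_least, use u in auto, rule cSUP_upper2[OF bdd u(1)], simp)
  show ?thesis using u eq by auto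
qed

theorem proposition3p4:
  fixes U :: "(real^'m) set" and f :: "real^'m \<Rightarrow> real"
    and n :: nat and X :: "nat \<Rightarrow> 'a::real_vector set"
    and E :: "(nat \<Rightarrow> 'a) \<Rightarrow> real^'m"
    and a b :: "nat \<Rightarrow> 'm \<Rightarrow> 'a \<Rightarrow> (nat \<Rightarrow> 'a) \<Rightarrow> real"
  assumes "compact U"
    and max_attained: "\<And>t. \<exists>u\<in>U. \<forall>v\<in>U. inner v t - f v \<le> inner u t - f u"
    and decomp: "\<And>i j \<theta>. i < n \<Longrightarrow> \<theta> \<in> paramset n X \<Longrightarrow>
        E \<theta> $ j = a i j (\<theta> i) (\<theta>(i := 0)) - b i j (\<theta> i) (\<theta>(i := 0))"
    and conv_a: "\<And>i j \<theta>. i < n \<Longrightarrow> \<theta> \<in> paramset n X \<Longrightarrow>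
        convex_on (X i) (\<lambda>x. a i j x (\<theta>(i := 0)))"
    and conv_b: "\<And>i j \<theta>. i < n \<Longrightarrow> \<theta> \<in> paramset n X \<Longrightarrow>
        convex_on (X i) (\<lambda>x. b i j x (\<theta>(i := 0)))"
  shows "(\<forall>i<n. \<forall>\<theta>\<in>paramset n X.
            conjU f U (E \<theta>) = gfun f U E a b i (\<theta> i) (\<theta>(i := 0)) - hfun U a b i (\<theta> i) (\<theta>(i := 0))
          \<and> convex_on (X i) (\<lambda>x. gfun f U E a b i x (\<theta>(i := 0)))
          \<and> convex_on (X i) (\<lambda>x. hfun U a b i x (\<theta>(i := 0))))
       \<and> BDC n X (\<lambda>\<theta>. conjU f U (E \<theta>))"
proof -
  have bU: "bounded U" using assms(1) compact_imp_bounded by blast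
  have low: "lowU U j \<le> u $ j" if "u \<in> U" for u j
  proof -
    have "bdd_below ((\<lambda>u. u $ j) ` U)"
      by (rule bounded_imp_bdd_below[OF bounded_component_cart[OF bU]])
    then show ?thesis unfolding lowU_def by (rule cINF_lower[OF _ that])
  qed
  have up: "u $ j \<le> upU U j" if "u \<in> U" for u j
  proof -
    have "bdd_above ((\<lambda>u. u $ j) ` U)"
      by (rule bounded_imp_bdd_above[OF bounded_component_cart[OF bU]])
    then show ?thesis unfolding upU_def by (rule cSUP_upper[OF that])
  qed
  have cp: "cplus U $ j \<ge> 0" "cplus U $ j \<ge> - lowU U j" for j unfolding cplus_def by auto
  have dp: "dplus U $ j \<ge> 0" "dplus U $ j \<ge> upU U j" for j unfolding dplus_def by auto
  have main: "conjU f U (E \<theta>) = gfun f U E a b i (\<theta> i) (\<theta>(i := 0)) - hfun U a b i (\<theta> i) (\<theta>(i := 0))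
          \<and> convex_on (X i) (\<lambda>x. gfun f U E a b i x (\<theta>(i := 0)))
          \<and> convex_on (X i) (\<lambda>x. hfun U a b i x (\<theta>(i := 0)))"
    if i: "i < n" and th: "\<theta> \<in> paramset n X" for i \<theta>
  proof -
    define tb where "tb = \<theta>(i := 0)"
    have cvx: "convex (X i)" using conv_a[OF i th] unfolding convex_on_def by blast
    have mem: "\<theta>(i := x) \<in> paramset n X" if "x \<in> X i" for x
      using th that i unfolding paramset_def by auto
    have Ej: "E (tb(i := x)) $ j = a i j x tb - b i j x tb" if "x \<in> X i" for x j
      using decomp[OF i mem[OF that], of j] unfolding tb_def by simp
    have ca: "convex_on (X i) (\<lambda>x. a i j x tb)" for j using conv_a[OF i th] unfolding tb_def .
    have cb: "convex_on (X i) (\<lambda>x. b i j x tb)" for j using conv_b[OF i th] unfolding tb_def .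
    have h_eq: "hfun U a b i x tb = (\<Sum>j\<in>UNIV. cplus U $ j * a i j x tb + dplus U $ j * b i j x tb)" for x
      unfolding hfun_def inner_vec_def by (simp add: sum.distrib)
    have hconv: "convex_on (X i) (\<lambda>x. hfun U a b i x tb)"
      unfolding h_eq
      by (rule convex_on_sum_fun[OF _ cvx], simp,
          intro convex_on_add convex_on_cmul cp dp ca cb)
    define phi where "phi u x = (\<Sum>j\<in>UNIV. (u $ j + cplus U $ j) * a i j x tb
        + (dplus U $ j - u $ j) * b i j x tb) - f u" for u x
    have phi_eq: "inner u (E (tb(i := x))) - f u + hfun U a b i x tb = phi u x"
      if "x \<in> X i" for u x
    proof -
      have "inner u (E (tb(i := x))) + hfun U a b i x tb
          = (\<Sum>j\<in>UNIV. u $ j * (a i j x tb - b i j x tb)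
              + (cplus U $ j * a i j x tb + dplus U $ j * b i j x tb))"
        unfolding h_eq inner_vec_def using Ej[OF that] by (simp add: sum.distrib)
      also have "\<dots> = (\<Sum>j\<in>UNIV. (u $ j + cplus U $ j) * a i j x tb
        + (dplus U $ j - u $ j) * b i j x tb)"
        by (rule sum.cong) (auto simp: algebra_simps)
      finally show ?thesis unfolding phi_def by simp
    qed
    have phiconv: "convex_on (X i) (phi u)" if "u \<in> U" for u
    proof -
      have "convex_on (X i) (\<lambda>x. (\<Sum>j\<in>UNIV. (u $ j + cplus U $ j) * a i j x tb
        + (dplus U $ j - u $ j) * b i j x tb) + (- f u))"
      proof (rule convex_on_add)
        have n1: "0 \<le> u $ j + cplus U $ j" for j using low[OF that, of j] cp(2)[of j] by linarith
        have n2: "0 \<le> dplus U $ j - u $ j" for j using up[OF that, of j] dp(2)[of j] by linarith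
        show "convex_on (X i) (\<lambda>x. \<Sum>j\<in>UNIV. (u $ j + cplus U $ j) * a i j x tb
          + (dplus U $ j - u $ j) * b i j x tb)"
          by (rule convex_on_sum_fun[OF _ cvx], simp)
             (intro convex_on_add convex_on_cmul ca cb n1 n2)
        show "convex_on (X i) (\<lambda>x. - f u)" by (simp add: convex_on_const cvx)
      qed
      then show ?thesis unfolding phi_def by (simp add: fun_eq_iff)
    qed
    have G: "\<exists>u\<in>U. gfun f U E a b i x tb = phi u x \<and> (\<forall>v\<in>U. phi v x \<le> gfun f U E a b i x tb)"
      if "x \<in> X i" for x
    proof -
      obtain u where u: "u \<in> U" "conjU f U (E (tb(i := x))) = inner u (E (tb(i := x))) - f u"
        "\<forall>v\<in>U. inner v (E (tb(i := x))) - f v \<le> conjU f U (E (tb(i := x)))"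
        using conjU_max[OF max_attained] by blast
      show ?thesis using u phi_eq[OF that] unfolding gfun_def
        by (intro bexI[OF _ u(1)]) (metis add.commute add_le_cancel_left)
    qed
    have gconv: "convex_on (X i) (\<lambda>x. gfun f U E a b i x tb)"
      unfolding convex_on_def
    proof (intro conjI cvx ballI allI impI)
      fix x y :: 'a and s t :: real
      assume xy: "x \<in> X i" "y \<in> X i" and st: "0 \<le> s" "0 \<le> t" "s + t = 1"
      have z: "s *\<^sub>R x + t *\<^sub>R y \<in> X i" using cvx xy st unfolding convex_def by blast
      obtain u where u: "u \<in> U" "gfun f U E a b i (s *\<^sub>R x + t *\<^sub>R y) tb = phi u (s *\<^sub>R x + t *\<^sub>R y)"
        using G[OF z] by blast
      have "phi u (s *\<^sub>R x + t *\<^sub>R y) \<le> s * phi u x + t * phi u y"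
        using phiconv[OF u(1)] xy st unfolding convex_on_def by blast
      also have "\<dots> \<le> s * gfun f U E a b i x tb + t * gfun f U E a b i y tb"
      proof -
        have "phi u x \<le> gfun f U E a b i x tb" using G[OF xy(1)] u(1) by blast
        moreover have "phi u y \<le> gfun f U E a b i y tb" using G[OF xy(2)] u(1) by blast
        ultimately show ?thesis using st by (intro add_mono mult_left_mono) simp_all
      qed
      finally show "gfun f U E a b i (s *\<^sub>R x + t *\<^sub>R y) tb
          \<le> s * gfun f U E a b i x tb + t * gfun f U E a b i y tb" using u(2) by simp
    qed
    have eq: "conjU f U (E \<theta>) = gfun f U E a b i (\<theta> i) tb - hfun U a b i (\<theta> i) tb"
      unfolding gfun_def tb_def by simp
    show ?thesis using eq gconv hconv unfolding tb_def by blast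
  qed
  show ?thesis
    unfolding BDC_def
  proof (intro conjI allI impI ballI)
    fix i \<theta> assume h: "i < n" "\<theta> \<in> paramset n X"
    note m = main[OF h]
    show "conjU f U (E \<theta>) = gfun f U E a b i (\<theta> i) (\<theta>(i := 0)) - hfun U a b i (\<theta> i) (\<theta>(i := 0))"
      using m by (rule conjunct1)
    show "convex_on (X i) (\<lambda>x. gfun f U E a b i x (\<theta>(i := 0)))"
      by (rule m[THEN conjunct2, THEN conjunct1])
    show "convex_on (X i) (\<lambda>x. hfun U a b i x (\<theta>(i := 0)))"
      by (rule m[THEN conjunct2, THEN conjunct2])
  next
    fix i assume i: "i < n"
    show "\<exists>g h. (\<forall>\<theta>\<in>paramset n X. conjU f U (E \<theta>) = g (\<theta> i) (\<theta>(i := 0)) - h (\<theta> i) (\<theta>(i := 0))) \<and>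
        (\<forall>\<theta>\<in>paramset n X. convex_on (X i) (\<lambda>x. g x (\<theta>(i := 0))) \<and> convex_on (X i) (\<lambda>x. h x (\<theta>(i := 0))))"
    proof (rule exI[where x="gfun f U E a b i"], rule exI[where x="hfun U a b i"], intro conjI ballI)
      fix \<theta> assume th: "\<theta> \<in> paramset n X"
      note m = main[OF i th]
      show "conjU f U (E \<theta>) = gfun f U E a b i (\<theta> i) (\<theta>(i := 0)) - hfun U a b i (\<theta> i) (\<theta>(i := 0))"
        using m by (rule conjunct1)
      show "convex_on (X i) (\<lambda>x. gfun f U E a b i x (\<theta>(i := 0)))"
        by (rule m[THEN conjunct2, THEN conjunct1])
      show "convex_on (X i) (\<lambda>x. hfun U a b i x (\<theta>(i := 0)))"
        by (rule m[THEN conjunct2, THEN conjunct2])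
    qed
  qed
qed

end
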